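(* For all deterministic parity tree automata $A$ and $B$, Duplicator has a winning strategy in the automata game $G(A,B)$ if and only if $L(A)\le_W L(B)$.
   Context: A deterministic parity tree automaton is $A=\langle\Sigma,Q,\delta,q_0,\mathrm{rank}\rangle$ with $\delta:Q\times\Sigma\to Q\times Q$ total; we write $q\xrightarrow{\sigma}q_1,q_2$ for $\delta(q,\sigma)=(q_1,q_2)$. A run is accepting if on every path the highest rank seen infinitely often is even; $L(A)$ is the set of accepted trees. A state is all-rejecting if the automaton started there accepts no tree; $\bot$ denotes such a state. $\le_W$ is continuous (Wadge) reducibility between subsets of tree spaces $T_\Sigma$ with the standard Cantor-type metric. The automata game $G(A,B)$: initially one token of Spoiler is in the initial state of $A$ and one token of Duplicator in the initial state of $B$. In each round each player performs finitely many actions of the following kinds on his own automaton: (fire) for a token in state $q$ choose a transition $q\xrightarrow{\sigma}q_1,q_2$, remove the token and place new tokens in $q_1$ and $q_2$; (remove) remove a token lying in a state other than $\bot$. Spoiler (on $A$) must in each round perform an action for every token created in the previous round; Duplicator (on $B$) may postpone acting on a token, but not forever. The tokens of each player trace a partial run of the respective automaton; a removed token is interpreted as plugging in an accepting subrun at the corresponding node, yielding a full run of each automaton. Duplicator wins iff both resulting runs are accepting or both are rejecting. *)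

theory Defs
  imports "HOL-Analysis.Analysis"
begin

section \<open>Binary trees, deterministic parity tree automata\<close>

text \<open>Nodes of the full binary tree are \<open>bool list\<close> (False = left, True = right),
  listed from the root.\<close>

type_synonym 'a tree = "bool list \<Rightarrow> 'a"

record ('a, 'q) dpta =
  dpta_delta :: "'q \<Rightarrow> 'a \<Rightarrow> 'q \<times> 'q"
  dpta_init :: 'q
  dpta_rank :: "'q \<Rightarrow> nat"

definition dir :: "bool \<Rightarrow> 'q \<times> 'q \<Rightarrow> 'q" where
  "dir d qq = (if d then snd qq else fst qq)"

fun run_from :: "('a, 'q) dpta \<Rightarrow> 'q \<Rightarrow> 'a tree \<Rightarrow> bool list \<Rightarrow> 'q" where
  "run_from A q t [] = q"
| "run_from A q t (d # p) =
     run_from A (dir d (dpta_delta A q (t []))) (\<lambda>x. t (d # x)) p"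

definition path_pre :: "(nat \<Rightarrow> bool) \<Rightarrow> nat \<Rightarrow> bool list" where
  "path_pre \<pi> n = map \<pi> [0..<n]"

definition accepting_run :: "('a, 'q) dpta \<Rightarrow> 'q tree \<Rightarrow> bool" where
  "accepting_run A \<rho> \<longleftrightarrow>
     (\<forall>\<pi>. even (Max {k. \<exists>\<^sub>\<infinity>n. dpta_rank A (\<rho> (path_pre \<pi> n)) = k}))"

definition acc_from :: "('a, 'q) dpta \<Rightarrow> 'q \<Rightarrow> 'a tree \<Rightarrow> bool" where
  "acc_from A q t \<longleftrightarrow> accepting_run A (run_from A q t)"

definition lang :: "('a, 'q) dpta \<Rightarrow> 'a tree set" where
  "lang A = {t. acc_from A (dpta_init A) t}"

definition all_rejecting :: "('a, 'q) dpta \<Rightarrow> 'q \<Rightarrow> bool" where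
  "all_rejecting A q \<longleftrightarrow> \<not> (\<exists>t. acc_from A q t)"

section \<open>Wadge reducibility\<close>

definition tree_dist :: "'a tree \<Rightarrow> 'a tree \<Rightarrow> real" where
  "tree_dist t t' =
     (if t = t' then 0 else (1/2) ^ (LEAST n. \<exists>p. length p = n \<and> t p \<noteq> t' p))"

definition tree_continuous :: "('a tree \<Rightarrow> 'b tree) \<Rightarrow> bool" where
  "tree_continuous f \<longleftrightarrow>
     (\<forall>t. \<forall>\<epsilon>>0. \<exists>\<delta>>0. \<forall>t'. tree_dist t t' < \<delta> \<longrightarrow> tree_dist (f t) (f t') < \<epsilon>)"

definition wadge_le :: "'a tree set \<Rightarrow> 'b tree set \<Rightarrow> bool" where
  "wadge_le L M \<longleftrightarrow> (\<exists>f. tree_continuous f \<and> (\<forall>t. t \<in> L \<longleftrightarrow> f t \<in> M))"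

section \<open>The automata game G(A,B)\<close>

text \<open>A (complete) play of one player on his automaton is recorded as a partial map
  from tree nodes (= tokens) to the action performed on that token and the round
  (numbered from 0) in which it was performed. Firing a token in state q by the
  transition for letter \<sigma> is \<open>Fire \<sigma>\<close> (transitions are determined by the letter,
  the automaton being deterministic); \<open>Remove\<close> removes the token.\<close>

datatype 'a action = Fire 'a | Remove

type_synonym 'a play = "bool list \<Rightarrow> ('a action \<times> nat) option"

definition is_token :: "'a play \<Rightarrow> bool list \<Rightarrow> bool" where
  "is_token pl p \<longleftrightarrow> (\<forall>i < length p. \<exists>\<sigma> r. pl (take i p) = Some (Fire \<sigma>, r))"

fun state_from :: "('a, 'q) dpta \<Rightarrow> 'q \<Rightarrow> 'a play \<Rightarrow> bool list \<Rightarrow> 'q" where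
  "state_from A q pl [] = q"
| "state_from A q pl (d # p) =
     (case pl [] of
        Some (Fire \<sigma>, _) \<Rightarrow> state_from A (dir d (dpta_delta A q \<sigma>)) (\<lambda>x. pl (d # x)) p
      | _ \<Rightarrow> q)"

definition state_at :: "('a, 'q) dpta \<Rightarrow> 'a play \<Rightarrow> bool list \<Rightarrow> 'q" where
  "state_at A pl p = state_from A (dpta_init A) pl p"

text \<open>Common legality conditions: actions are performed exactly on tokens, each token is
  acted upon (eventually), a token is acted upon not earlier than the round in which it was
  created, finitely many actions per round, and only tokens not in an all-rejecting state
  are removed.\<close>
definition legal_play :: "('a, 'q) dpta \<Rightarrow> 'a play \<Rightarrow> bool" where
  "legal_play A pl \<longleftrightarrow>
     (\<forall>p. pl p \<noteq> None \<longleftrightarrow> is_token pl p) \<and>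
     (\<forall>p d \<sigma> r a r'. pl p = Some (Fire \<sigma>, r) \<longrightarrow> pl (p @ [d]) = Some (a, r') \<longrightarrow> r \<le> r') \<and>
     (\<forall>n. finite {p. \<exists>a. pl p = Some (a, n)}) \<and>
     (\<forall>p r. pl p = Some (Remove, r) \<longrightarrow> \<not> all_rejecting A (state_at A pl p))"

definition spoiler_legal :: "('a, 'q) dpta \<Rightarrow> 'a play \<Rightarrow> bool" where
  "spoiler_legal A pl \<longleftrightarrow> legal_play A pl \<and>
     (\<exists>a. pl [] = Some (a, 0)) \<and>
     (\<forall>p d \<sigma> r a r'. pl p = Some (Fire \<sigma>, r) \<longrightarrow> pl (p @ [d]) = Some (a, r') \<longrightarrow> r' \<le> Suc r)"

definition dup_legal :: "('a, 'q) dpta \<Rightarrow> 'a play \<Rightarrow> bool" where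
  "dup_legal A pl \<longleftrightarrow> legal_play A pl"

definition upto_round :: "nat \<Rightarrow> 'a play \<Rightarrow> 'a play" where
  "upto_round n pl = (\<lambda>p. case pl p of Some (a, r) \<Rightarrow> if r \<le> n then Some (a, r) else None
                                    | None \<Rightarrow> None)"

text \<open>The labelled tree traced by a play, where a removed token in state q is replaced by a
  fixed tree accepted from q (i.e. an accepting subrun is plugged in). The resulting run of the
  automaton is the run on this tree.\<close>
fun result_from :: "('a, 'q) dpta \<Rightarrow> 'q \<Rightarrow> 'a play \<Rightarrow> 'a tree" where
  "result_from A q pl [] =
     (case pl [] of
        Some (Fire \<sigma>, _) \<Rightarrow> \<sigma>
      | Some (Remove, _) \<Rightarrow> (SOME t. acc_from A q t) []
      | None \<Rightarrow> undefined)"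
| "result_from A q pl (d # p) =
     (case pl [] of
        Some (Fire \<sigma>, _) \<Rightarrow> result_from A (dir d (dpta_delta A q \<sigma>)) (\<lambda>x. pl (d # x)) p
      | Some (Remove, _) \<Rightarrow> (SOME t. acc_from A q t) (d # p)
      | None \<Rightarrow> undefined)"

definition result_tree :: "('a, 'q) dpta \<Rightarrow> 'a play \<Rightarrow> 'a tree" where
  "result_tree A pl = result_from A (dpta_init A) pl"

text \<open>A strategy of Duplicator maps Spoiler's play to Duplicator's play; Duplicator's actions in
  round n may depend only on Spoiler's actions in rounds 0..n (in each round Spoiler moves
  first).\<close>
definition dup_winning_strategy ::
  "('a, 'q) dpta \<Rightarrow> ('b, 'p) dpta \<Rightarrow> ('a play \<Rightarrow> 'b play) \<Rightarrow> bool" where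
  "dup_winning_strategy A B f \<longleftrightarrow>
     (\<forall>n s s'. spoiler_legal A s \<longrightarrow> spoiler_legal A s' \<longrightarrow>
        upto_round n s = upto_round n s' \<longrightarrow> upto_round n (f s) = upto_round n (f s')) \<and>
     (\<forall>s. spoiler_legal A s \<longrightarrow>
        dup_legal B (f s) \<and>
        (result_tree A s \<in> lang A \<longleftrightarrow> result_tree B (f s) \<in> lang B))"

definition dup_wins :: "('a, 'q) dpta \<Rightarrow> ('b, 'p) dpta \<Rightarrow> bool" where
  "dup_wins A B \<longleftrightarrow> (\<exists>f. dup_winning_strategy A B f)"

end

theory Submission
  imports Defs
begin

definition agree :: "nat \<Rightarrow> 'a tree \<Rightarrow> 'a tree \<Rightarrow> bool" where
  "agree n t t' \<longleftrightarrow> (\<forall>p. length p \<le> n \<longrightarrow> t p = t' p)"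

lemma agree_mono: "agree n t t' \<Longrightarrow> m \<le> n \<Longrightarrow> agree m t t'"
  by (auto simp: agree_def)

lemma agree_sym: "agree n t t' \<Longrightarrow> agree n t' t"
  by (auto simp: agree_def)

lemma agree_trans: "agree n t t' \<Longrightarrow> agree n t' t'' \<Longrightarrow> agree n t t''"
  by (auto simp: agree_def)

lemma fin_len_le: "finite {p::bool list. length p \<le> n}"
  using finite_lists_length_le[of "UNIV::bool set" n] by simp

lemma dist_small_agree:
  assumes "tree_dist t t' < (1/2)^N" shows "agree N t t'"
proof (rule ccontr)
  assume "\<not> agree N t t'"
  then obtain p where p: "length p \<le> N" "t p \<noteq> t' p" by (auto simp: agree_def)
  hence ne: "t \<noteq> t'" by auto
  let ?m = "LEAST n. \<exists>p. length p = n \<and> t p \<noteq> t' p"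
  have "?m \<le> length p" by (rule Least_le) (use p in auto)
  hence "?m \<le> N" using p by simp
  hence "(1/2::real)^N \<le> (1/2)^?m" by (rule power_decreasing) auto
  moreover have "tree_dist t t' = (1/2)^?m" using ne by (simp add: tree_dist_def)
  ultimately show False using assms by simp
qed

lemma agree_dist:
  assumes "agree k t t'" shows "tree_dist t t' \<le> (1/2)^(Suc k)"
proof (cases "t = t'")
  case True thus ?thesis by (simp add: tree_dist_def)
next
  case False
  then obtain p where "t p \<noteq> t' p" by auto
  hence ex: "\<exists>n p. length p = n \<and> t p \<noteq> t' p" by auto
  let ?m = "LEAST n. \<exists>p. length p = n \<and> t p \<noteq> t' p"
  from LeastI_ex[OF ex] obtain q where q: "length q = ?m" "t q \<noteq> t' q" by blast
  have "Suc k \<le> ?m"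
  proof (rule ccontr)
    assume "\<not> Suc k \<le> ?m"
    hence "length q \<le> k" using q by simp
    thus False using assms q unfolding agree_def by blast
  qed
  hence "(1/2::real)^?m \<le> (1/2)^(Suc k)" by (rule power_decreasing) auto
  moreover have "tree_dist t t' = (1/2)^?m" using False by (simp add: tree_dist_def)
  ultimately show ?thesis by simp
qed

lemma cont_det:
  assumes "tree_continuous f" shows "\<exists>N. \<forall>t'. agree N t t' \<longrightarrow> agree k (f t) (f t')"
proof -
  have "(1/2::real)^k > 0" by simp
  then obtain \<delta> where d: "\<delta>>0" "\<forall>t'. tree_dist t t' < \<delta> \<longrightarrow> tree_dist (f t) (f t') < (1/2)^k"
    using assms unfolding tree_continuous_def by blast
  obtain N where N: "(1/2::real)^N < \<delta>" using real_arch_pow_inv[OF d(1), of "1/2"] by auto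
  show ?thesis
  proof (intro exI allI impI)
    fix t' assume "agree N t t'"
    hence "tree_dist t t' \<le> (1/2)^(Suc N)" by (rule agree_dist)
    also have "\<dots> \<le> (1/2)^N" by (rule power_decreasing) auto
    finally have "tree_dist t t' < \<delta>" using N by simp
    hence "tree_dist (f t) (f t') < (1/2)^k" using d by blast
    thus "agree k (f t) (f t')" by (rule dist_small_agree)
  qed
qed

lemma result_fire:
  "result_from A q (\<lambda>p. Some (Fire (u p), r p)) p = u p"
  by (induction p arbitrary: q u r) auto

lemma res_agree:
  "(\<And>i. i \<le> length p \<Longrightarrow> (\<forall>j<i. \<exists>\<sigma> r. pl (take j p) = Some (Fire \<sigma>, r))
      \<Longrightarrow> pl (take i p) = pl' (take i p))
   \<Longrightarrow> result_from A q pl p = result_from A q pl' p"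
proof (induction p arbitrary: q pl pl')
  case Nil
  have "pl [] = pl' []" using Nil[of 0] by simp
  thus ?case by simp
next
  case (Cons d p)
  have e: "pl [] = pl' []" using Cons.prems[of 0] by simp
  show ?case
  proof (cases "pl []")
    case None thus ?thesis using e by simp
  next
    case (Some x)
    obtain a r where x: "x = (a,r)" by (cases x)
    show ?thesis
    proof (cases a)
      case Remove
      have "pl' [] = Some (Remove, r)" using e Some x Remove by simp
      thus ?thesis using Some x Remove by simp
    next
      case (Fire \<sigma>)
      have "result_from A (dir d (dpta_delta A q \<sigma>)) (\<lambda>x. pl (d # x)) p
          = result_from A (dir d (dpta_delta A q \<sigma>)) (\<lambda>x. pl' (d # x)) p"
      proof (rule Cons.IH)
        fix i assume i: "i \<le> length p"
          and h: "\<forall>j<i. \<exists>\<sigma> r. pl (d # take j p) = Some (Fire \<sigma>, r)"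
        have "\<forall>j<Suc i. \<exists>\<sigma> r. pl (take j (d#p)) = Some (Fire \<sigma>, r)"
        proof (intro allI impI)
          fix j assume j: "j < Suc i"
          show "\<exists>\<sigma> r. pl (take j (d#p)) = Some (Fire \<sigma>, r)"
          proof (cases j)
            case 0 thus ?thesis using Some x Fire by simp
          next
            case (Suc j') thus ?thesis using h j by simp
          qed
        qed
        from Cons.prems[OF _ this] i show "pl (d # take i p) = pl' (d # take i p)" by simp
      qed
      moreover have "pl' [] = Some (Fire \<sigma>, r)" using e Some x Fire by simp
      ultimately show ?thesis using Some x Fire by simp
    qed
  qed
qed

lemma spoiler_round:
  assumes "spoiler_legal A s" shows "s p = Some (a, r) \<Longrightarrow> r \<le> length p"
proof (induction p arbitrary: a r rule: rev_induct)
  case Nil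
  then show ?case using assms unfolding spoiler_legal_def by auto
next
  case (snoc x p)
  have "is_token s (p @ [x])" using assms snoc.prems unfolding spoiler_legal_def legal_play_def by blast
  hence "\<exists>\<sigma> r. s (take (length p) (p @ [x])) = Some (Fire \<sigma>, r)" unfolding is_token_def
    by (metis length_append_singleton lessI)
  then obtain \<sigma> r0 where r0: "s p = Some (Fire \<sigma>, r0)" by auto
  have "r0 \<le> length p" using snoc.IH[OF r0] .
  moreover have "r \<le> Suc r0" using assms r0 snoc.prems unfolding spoiler_legal_def by blast
  ultimately show ?case by simp
qed

lemma spoiler_upto:
  assumes "spoiler_legal A s" "length p \<le> n" shows "upto_round n s p = s p"
proof (cases "s p")
  case None thus ?thesis by (simp add: upto_round_def)
next
  case (Some x)
  obtain a r where x: "x = (a,r)" by (cases x)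
  have "r \<le> n" using spoiler_round[OF assms(1)] Some x assms(2) by fastforce
  thus ?thesis using Some x by (simp add: upto_round_def)
qed

lemma spoiler_res_agree:
  assumes "spoiler_legal A s" "spoiler_legal A s'" "upto_round n s = upto_round n s'"
  shows "agree n (result_tree A s) (result_tree A s')"
  unfolding agree_def result_tree_def
proof (intro allI impI)
  fix p :: "bool list" assume p: "length p \<le> n"
  show "result_from A (dpta_init A) s p = result_from A (dpta_init A) s' p"
  proof (rule res_agree)
    fix i assume "i \<le> length p"
    hence "length (take i p) \<le> n" using p by simp
    thus "s (take i p) = s' (take i p)"
      using spoiler_upto[OF assms(1)] spoiler_upto[OF assms(2)] assms(3) by metis
  qed
qed

lemma spl_legal: "spoiler_legal A (\<lambda>p. Some (Fire (t p), length p))"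
proof -
  have "{p. \<exists>a. Some (Fire (t p), length p) = Some (a, n)} \<subseteq> {p::bool list. length p \<le> n}" for n
    by auto
  hence "finite {p. \<exists>a. Some (Fire (t p), length p) = Some (a, n)}" for n
    using fin_len_le finite_subset by blast
  thus ?thesis unfolding spoiler_legal_def legal_play_def is_token_def by auto
qed

lemma least_eq:
  fixes P Q :: "nat \<Rightarrow> bool"
  assumes "\<forall>m\<le>n. P m \<longleftrightarrow> Q m" "Least P \<le> n" "\<exists>x. P x"
  shows "Least Q = Least P"
proof -
  have P: "P (Least P)" using LeastI_ex[OF assms(3)] .
  hence Q: "Q (Least P)" using assms by blast
  have "Least Q \<le> Least P" using Q by (rule Least_le)
  moreover have "Q (Least Q)" using LeastI[of Q, OF Q] .
  hence "P (Least Q)" using assms calculation by auto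
  hence "Least P \<le> Least Q" by (rule Least_le)
  ultimately show ?thesis by simp
qed

theorem lemma5p2:
  fixes A :: "('a::finite, 'q::finite) dpta" and B :: "('b::finite, 'p::finite) dpta"
  shows "dup_wins A B \<longleftrightarrow> wadge_le (lang A) (lang B)"
proof
  assume "dup_wins A B"
  then obtain g where g: "dup_winning_strategy A B g" unfolding dup_wins_def by blast
  define sp where "sp = (\<lambda>(t::'a tree). (\<lambda>p. Some (Fire (t p), length p)) :: 'a play)"
  define F where "F = (\<lambda>t. result_tree B (g (sp t)))"
  have spl: "\<And>t. spoiler_legal A (sp t)" using spl_legal by (simp add: sp_def)
  have rt: "\<And>t. result_tree A (sp t) = t"
    by (rule ext) (simp add: sp_def result_tree_def result_fire)
  have gw: "\<forall>s. spoiler_legal A s \<longrightarrow> (result_tree A s \<in> lang A \<longleftrightarrow> result_tree B (g s) \<in> lang B)"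
    using g unfolding dup_winning_strategy_def by blast
  have lng: "\<forall>t. t \<in> lang A \<longleftrightarrow> F t \<in> lang B"
  proof
    fix t
    have "result_tree A (sp t) \<in> lang A \<longleftrightarrow> result_tree B (g (sp t)) \<in> lang B"
      by (rule gw[rule_format, OF spl[of t]])
    thus "t \<in> lang A \<longleftrightarrow> F t \<in> lang B" using rt[of t] by (simp add: F_def)
  qed
  have "tree_continuous F" unfolding tree_continuous_def
  proof (intro allI impI)
    fix t :: "'a tree" and \<epsilon> :: real assume "\<epsilon> > 0"
    obtain k where k: "(1/2::real)^k < \<epsilon>" using real_arch_pow_inv[OF \<open>\<epsilon> > 0\<close>, of "1/2"] by auto
    let ?pl = "g (sp t)"
    have dl: "legal_play B ?pl" using g spl unfolding dup_winning_strategy_def dup_legal_def by blast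
    define N where "N = Max ((\<lambda>p. case ?pl p of Some (a, r) \<Rightarrow> r | None \<Rightarrow> 0) ` {p. length p \<le> k})"
    have bound: "r \<le> N" if "length p \<le> k" "?pl p = Some (a,r)" for p a r
    proof -
      have "(case ?pl p of Some (a, r) \<Rightarrow> r | None \<Rightarrow> 0) \<le> N"
        unfolding N_def using fin_len_le that(1) by (intro Max_ge) auto
      thus ?thesis using that(2) by simp
    qed
    show "\<exists>\<delta>>0. \<forall>t'. tree_dist t t' < \<delta> \<longrightarrow> tree_dist (F t) (F t') < \<epsilon>"
    proof (rule exI[of _ "(1/2)^N"], intro conjI allI impI)
      show "(0::real) < (1/2)^N" by simp
      fix t' assume "tree_dist t t' < (1/2)^N"
      hence ag: "agree N t t'" by (rule dist_small_agree)
      have "upto_round N (sp t) = upto_round N (sp t')"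
        unfolding upto_round_def sp_def using ag by (auto simp: agree_def fun_eq_iff)
      hence up: "upto_round N (g (sp t)) = upto_round N (g (sp t'))"
        using g spl unfolding dup_winning_strategy_def by blast
      have "agree k (F t) (F t')" unfolding agree_def F_def result_tree_def
      proof (intro allI impI)
        fix p :: "bool list" assume p: "length p \<le> k"
        show "result_from B (dpta_init B) (g (sp t)) p = result_from B (dpta_init B) (g (sp t')) p"
        proof (rule res_agree)
          fix i assume i: "i \<le> length p"
            and tok: "\<forall>j<i. \<exists>\<sigma> r. g (sp t) (take j p) = Some (Fire \<sigma>, r)"
          have "is_token (g (sp t)) (take i p)" unfolding is_token_def using tok i by (simp add: min_def)
          then obtain a r where ar: "g (sp t) (take i p) = Some (a, r)"
            using dl unfolding legal_play_def by fastforce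
          have "r \<le> N" using bound[OF _ ar] p i by simp
          hence "upto_round N (g (sp t)) (take i p) = Some (a,r)" using ar by (simp add: upto_round_def)
          hence "upto_round N (g (sp t')) (take i p) = Some (a,r)" using up by simp
          hence "g (sp t') (take i p) = Some (a,r)"
            by (auto simp: upto_round_def split: option.splits if_splits)
          thus "g (sp t) (take i p) = g (sp t') (take i p)" using ar by simp
        qed
      qed
      hence "tree_dist (F t) (F t') \<le> (1/2)^Suc k" by (rule agree_dist)
      also have "\<dots> \<le> (1/2)^k" by (rule power_decreasing) auto
      finally show "tree_dist (F t) (F t') < \<epsilon>" using k by simp
    qed
  qed
  thus "wadge_le (lang A) (lang B)" unfolding wadge_le_def using lng by blast
next
  assume "wadge_le (lang A) (lang B)"
  then obtain f where fc: "tree_continuous f" and fl: "\<forall>t. t \<in> lang A \<longleftrightarrow> f t \<in> lang B"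
    unfolding wadge_le_def by blast
  define detm where "detm = (\<lambda>t k n. \<forall>t'. agree n t t' \<longrightarrow> agree k (f t) (f t'))"
  have ex: "\<And>t k. \<exists>n. detm t k n" using cont_det[OF fc] by (simp add: detm_def)
  have dmono: "detm t k' n'" if "detm t k n" "k' \<le> k" "n \<le> n'" for t k k' n n'
    unfolding detm_def
  proof (intro allI impI)
    fix t' assume "agree n' t t'"
    hence "agree n t t'" using that(3) by (rule agree_mono)
    hence "agree k (f t) (f t')" using that(1) unfolding detm_def by blast
    thus "agree k' (f t) (f t')" using that(2) by (rule agree_mono)
  qed
  have dtrans: "detm t' k m" if "detm t k m" "agree n t t'" "m \<le> n" for t t' k m n
    unfolding detm_def
  proof (intro allI impI)
    fix t'' assume a: "agree m t' t''"
    have am: "agree m t t'" using that agree_mono by blast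
    have "agree k (f t) (f t')" using that(1) am unfolding detm_def by blast
    moreover have "agree k (f t) (f t'')" using that(1) agree_trans[OF am a] unfolding detm_def by blast
    ultimately show "agree k (f t') (f t'')" using agree_sym agree_trans by blast
  qed
  define rnd where "rnd = (\<lambda>t (p::bool list). max (length p) (LEAST n. detm t (length p) n))"
  define G where "G = (\<lambda>s p. Some (Fire (f (result_tree A s) p), rnd (result_tree A s) p))"
  have rmono: "rnd t p \<le> rnd t (p @ [d])" for t p d
  proof -
    have "detm t (Suc (length p)) (LEAST n. detm t (Suc (length p)) n)" using LeastI_ex[OF ex] .
    hence "detm t (length p) (LEAST n. detm t (Suc (length p)) n)" by (rule dmono) auto
    hence "(LEAST n. detm t (length p) n) \<le> (LEAST n. detm t (Suc (length p)) n)" by (rule Least_le)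
    thus ?thesis unfolding rnd_def by (intro max.mono) simp_all
  qed
  have key: "rnd t' p = rnd t p \<and> f t' p = f t p" if "agree n t t'" "rnd t p \<le> n" for n t t' p
  proof -
    let ?k = "length p"
    let ?L = "LEAST m. detm t ?k m"
    have L: "?L \<le> n" using that(2) unfolding rnd_def by simp
    have dL: "detm t ?k ?L" using LeastI_ex[OF ex] .
    have eqv: "\<forall>m\<le>n. detm t ?k m \<longleftrightarrow> detm t' ?k m"
    proof (intro allI impI)
      fix m assume "m \<le> n"
      show "detm t ?k m \<longleftrightarrow> detm t' ?k m"
        using dtrans[OF _ that(1) \<open>m \<le> n\<close>] dtrans[OF _ agree_sym[OF that(1)] \<open>m \<le> n\<close>] by blast
    qed
    have "(LEAST m. detm t' ?k m) = ?L" by (rule least_eq[OF eqv L ex])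
    hence r: "rnd t' p = rnd t p" unfolding rnd_def by simp
    have "agree ?L t t'" using that(1) L agree_mono by blast
    hence "agree ?k (f t) (f t')" using dL unfolding detm_def by blast
    hence "f t' p = f t p" unfolding agree_def by simp
    with r show ?thesis by simp
  qed
  have "dup_winning_strategy A B G" unfolding dup_winning_strategy_def
  proof (intro conjI allI impI)
    fix n s s' assume s: "spoiler_legal A s" and s': "spoiler_legal A s'"
      and u: "upto_round n s = upto_round n s'"
    define t where "t = result_tree A s"
    define t' where "t' = result_tree A s'"
    have ag: "agree n t t'" using spoiler_res_agree[OF s s' u] by (simp add: t_def t'_def)
    show "upto_round n (G s) = upto_round n (G s')"
    proof (rule ext)
      fix p
      show "upto_round n (G s) p = upto_round n (G s') p"
      proof (cases "rnd t p \<le> n")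
        case True thus ?thesis using key[OF ag True]
          by (simp add: upto_round_def G_def t_def t'_def)
      next
        case False
        show ?thesis
        proof (cases "rnd t' p \<le> n")
          case True thus ?thesis using key[OF agree_sym[OF ag] True] False by simp
        next
          case False2: False
          thus ?thesis using False by (simp add: upto_round_def G_def t_def t'_def)
        qed
      qed
    qed
  next
    fix s assume s: "spoiler_legal A s"
    have fin: "finite {p. \<exists>a. G s p = Some (a, n)}" for n
    proof -
      have "{p. \<exists>a. G s p = Some (a, n)} \<subseteq> {p::bool list. length p \<le> n}"
        by (auto simp: G_def rnd_def)
      thus ?thesis using fin_len_le finite_subset by blast
    qed
    show "dup_legal B (G s)" unfolding dup_legal_def legal_play_def
      using fin rmono by (auto simp: G_def is_token_def)
    have "result_tree B (G s) = f (result_tree A s)"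
      by (rule ext) (simp add: G_def result_tree_def result_fire)
    thus "result_tree A s \<in> lang A \<longleftrightarrow> result_tree B (G s) \<in> lang B" using fl by simp
  qed
  thus "dup_wins A B" unfolding dup_wins_def by blast
qed

end
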